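(* Let $(X,\|\cdot\|_X)$ be a Banach space, $\mathcal{K}\subset X$ compact, and $\gamma\ge2\,\mathrm{rad}(\mathcal{K})$. Then $\lim_{n\to\infty}d_n^\gamma(\mathcal{K})_X=0$.
   Context: $\mathrm{rad}(\mathcal{K})=\inf_{g\in X}\sup_{f\in\mathcal{K}}\|f-g\|_X$. For $k\ge1$ and a norm $\|\cdot\|_{Y_k}$ on $\mathbb{R}^k$ let $B_{Y_k}=\{y\in\mathbb{R}^k:\|y\|_{Y_k}\le1\}$. For $\gamma\ge0$, the fixed Lipschitz width is $d^\gamma(\mathcal{K},Y_k)_X=\inf_{\Phi}\sup_{f\in\mathcal{K}}\inf_{y\in B_{Y_k}}\|f-\Phi(y)\|_X$, the infimum over all maps $\Phi:B_{Y_k}\to X$ with $\|\Phi(y)-\Phi(y')\|_X\le\gamma\|y-y'\|_{Y_k}$ for all $y,y'\in B_{Y_k}$. The Lipschitz width is $d_n^\gamma(\mathcal{K})_X=\inf_{1\le k\le n}\inf_{\|\cdot\|_{Y_k}}d^\gamma(\mathcal{K},Y_k)_X$, the inner infimum over all norms on $\mathbb{R}^k$. *)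

theory Defs
  imports "HOL-Analysis.Analysis"
begin

text \<open>R^k is represented as the real functions on nat vanishing outside {0..<k}.\<close>

definition Rk :: "nat \<Rightarrow> (nat \<Rightarrow> real) set" where
  "Rk k = {y. \<forall>i\<ge>k. y i = 0}"

definition is_norm_on_Rk :: "nat \<Rightarrow> ((nat \<Rightarrow> real) \<Rightarrow> real) \<Rightarrow> bool" where
  "is_norm_on_Rk k N \<longleftrightarrow>
     (\<forall>y\<in>Rk k. \<forall>z\<in>Rk k. N (\<lambda>i. y i + z i) \<le> N y + N z) \<and>
     (\<forall>y\<in>Rk k. \<forall>c::real. N (\<lambda>i. c * y i) = \<bar>c\<bar> * N y) \<and>
     (\<forall>y\<in>Rk k. N y = 0 \<longleftrightarrow> y = (\<lambda>i. 0))"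

definition unit_ball_Rk :: "nat \<Rightarrow> ((nat \<Rightarrow> real) \<Rightarrow> real) \<Rightarrow> (nat \<Rightarrow> real) set" where
  "unit_ball_Rk k N = {y \<in> Rk k. N y \<le> 1}"

text \<open>Chebyshev radius; values in ennreal so that sup over the empty set is 0.\<close>
definition cheb_rad :: "'a::real_normed_vector set \<Rightarrow> ennreal" where
  "cheb_rad K = (INF g. SUP f\<in>K. ennreal (norm (f - g)))"

definition fixed_lip_width ::
  "real \<Rightarrow> 'a::real_normed_vector set \<Rightarrow> nat \<Rightarrow> ((nat \<Rightarrow> real) \<Rightarrow> real) \<Rightarrow> ennreal" where
  "fixed_lip_width \<gamma> K k N =
     (INF \<Phi>\<in>{\<Phi> :: (nat \<Rightarrow> real) \<Rightarrow> 'a. \<forall>y\<in>unit_ball_Rk k N. \<forall>y'\<in>unit_ball_Rk k N.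
                 norm (\<Phi> y - \<Phi> y') \<le> \<gamma> * N (\<lambda>i. y i - y' i)}.
        SUP f\<in>K. INF y\<in>unit_ball_Rk k N. ennreal (norm (f - \<Phi> y)))"

definition lip_width :: "real \<Rightarrow> 'a::real_normed_vector set \<Rightarrow> nat \<Rightarrow> ennreal" where
  "lip_width \<gamma> K n =
     (INF k\<in>{1..n}. INF N\<in>{N. is_norm_on_Rk k N}. fixed_lip_width \<gamma> K k N)"

end

theory Submission
  imports Defs
begin

lemma l1_norm: "is_norm_on_Rk m (\<lambda>y. \<Sum>i<m. \<bar>y i\<bar>)"
  unfolding is_norm_on_Rk_def
proof (intro conjI ballI allI)
  fix y z :: "nat \<Rightarrow> real"
  show "(\<Sum>i<m. \<bar>y i + z i\<bar>) \<le> (\<Sum>i<m. \<bar>y i\<bar>) + (\<Sum>i<m. \<bar>z i\<bar>)"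
    by (simp add: sum.distrib[symmetric] sum_mono abs_triangle_ineq)
next
  fix y :: "nat \<Rightarrow> real" and c :: real
  show "(\<Sum>i<m. \<bar>c * y i\<bar>) = \<bar>c\<bar> * (\<Sum>i<m. \<bar>y i\<bar>)"
    by (simp add: abs_mult sum_distrib_left)
next
  fix y :: "nat \<Rightarrow> real" assume y: "y \<in> Rk m"
  show "((\<Sum>i<m. \<bar>y i\<bar>) = 0) = (y = (\<lambda>i. 0))"
  proof
    assume "(\<Sum>i<m. \<bar>y i\<bar>) = 0"
    then have "\<forall>i\<in>{..<m}. \<bar>y i\<bar> = 0" by (subst (asm) sum_nonneg_eq_0_iff) auto
    then show "y = (\<lambda>i. 0)"
    proof (intro ext)
      fix x assume h: "\<forall>i\<in>{..<m}. \<bar>y i\<bar> = 0"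
      show "y x = 0" using h y unfolding Rk_def by (cases "x < m") auto
    qed
  qed simp
qed

lemma main:
  fixes K :: "'a::real_normed_vector set" and p :: "nat \<Rightarrow> 'a"
  assumes g0: "\<gamma> \<ge> 0" and pg: "\<forall>i<m. norm (p i - g) \<le> \<gamma>"
    and cov: "\<forall>f\<in>K. \<exists>i<m. norm (f - p i) \<le> \<epsilon>"
  shows "fixed_lip_width \<gamma> K m (\<lambda>y. \<Sum>i<m. \<bar>y i\<bar>) \<le> ennreal \<epsilon>"
proof -
  define N where "N = (\<lambda>y::nat\<Rightarrow>real. \<Sum>i<m. \<bar>y i\<bar>)"
  define \<Phi> where "\<Phi> = (\<lambda>y. g + (\<Sum>i<m. y i *\<^sub>R (p i - g)))"
  have lip: "norm (\<Phi> y - \<Phi> y') \<le> \<gamma> * N (\<lambda>i. y i - y' i)" for y y'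
  proof -
    have "\<Phi> y - \<Phi> y' = (\<Sum>i<m. (y i - y' i) *\<^sub>R (p i - g))"
      by (simp add: \<Phi>_def sum_subtractf[symmetric] scaleR_diff_left)
    then have "norm (\<Phi> y - \<Phi> y') \<le> (\<Sum>i<m. norm ((y i - y' i) *\<^sub>R (p i - g)))"
      by (metis norm_sum)
    also have "\<dots> \<le> (\<Sum>i<m. \<bar>y i - y' i\<bar> * \<gamma>)"
      using pg by (intro sum_mono) (simp add: mult_left_mono)
    also have "\<dots> = \<gamma> * N (\<lambda>i. y i - y' i)"
      by (simp add: N_def sum_distrib_left mult.commute)
    finally show ?thesis .
  qed
  have "fixed_lip_width \<gamma> K m N \<le> (SUP f\<in>K. INF y\<in>unit_ball_Rk m N. ennreal (norm (f - \<Phi> y)))"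
    unfolding fixed_lip_width_def by (rule INF_lower) (use lip in auto)
  also have "\<dots> \<le> ennreal \<epsilon>"
  proof (rule SUP_least)
    fix f assume "f \<in> K"
    then obtain i where i: "i < m" "norm (f - p i) \<le> \<epsilon>" using cov by blast
    define e where "e = (\<lambda>j. if j = i then 1 else (0::real))"
    have "N e = 1" using i by (simp add: N_def e_def)
    then have e: "e \<in> unit_ball_Rk m N" using i
      by (auto simp: unit_ball_Rk_def Rk_def e_def)
    have "\<Phi> e = p i"
    proof -
      have "(\<Sum>j<m. e j *\<^sub>R (p j - g)) = (\<Sum>j<m. if j = i then p j - g else 0)"
        by (rule sum.cong) (auto simp: e_def)
      also have "\<dots> = p i - g" using i by simp
      finally show ?thesis by (simp add: \<Phi>_def)
    qed
    then show "(INF y\<in>unit_ball_Rk m N. ennreal (norm (f - \<Phi> y))) \<le> ennreal \<epsilon>"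
      using e i by (intro INF_lower2[of e]) (auto intro: ennreal_leI)
  qed
  finally show ?thesis by (simp add: N_def)
qed

lemma lw_le:
  fixes K :: "'a::real_normed_vector set" and p :: "nat \<Rightarrow> 'a"
  assumes g0: "\<gamma> \<ge> 0" and pg: "\<forall>i<m. norm (p i - g) \<le> \<gamma>"
    and cov: "\<forall>f\<in>K. \<exists>i<m. norm (f - p i) \<le> \<epsilon>" and m: "1 \<le> m" "m \<le> n"
  shows "lip_width \<gamma> K n \<le> ennreal \<epsilon>"
proof -
  have "lip_width \<gamma> K n \<le> (INF N\<in>{N. is_norm_on_Rk m N}. fixed_lip_width \<gamma> K m N)"
    unfolding lip_width_def using m by (intro INF_lower) auto
  also have "\<dots> \<le> fixed_lip_width \<gamma> K m (\<lambda>y. \<Sum>i<m. \<bar>y i\<bar>)"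
    using l1_norm by (intro INF_lower) auto
  also have "\<dots> \<le> ennreal \<epsilon>" by (rule main[OF assms(1-3)])
  finally show ?thesis .
qed

lemma finite_enum:
  assumes "finite F" "F \<noteq> {}"
  obtains m :: nat and p where "1 \<le> m" "F = p ` {..<m}"
proof -
  obtain m :: nat and p where F: "F = p ` {i. i < m}"
    using finite_imp_nat_seg_image_inj_on[OF assms(1)] by blast
  have "m \<noteq> 0" using assms(2) F by auto
  then have "1 \<le> m" by simp
  moreover have "F = p ` {..<m}" using F by (simp add: lessThan_def)
  ultimately show ?thesis by (rule that)
qed

theorem corollary4p3:
  fixes K :: "'a::banach set" and \<gamma> :: real
  assumes "compact K"
    and "\<gamma> \<ge> 0"
    and "ennreal \<gamma> \<ge> 2 * cheb_rad K"
  shows "(\<lambda>n. lip_width \<gamma> K n) \<longlonglongrightarrow> 0"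
proof -
  have key: "\<exists>m. \<forall>n\<ge>m. lip_width \<gamma> K n \<le> ennreal \<epsilon>" if e: "\<epsilon> > 0" for \<epsilon>
  proof -
    have "\<exists>F g. finite F \<and> g \<in> F \<and> (\<forall>p\<in>F. norm (p - g) \<le> \<gamma>) \<and>
      (\<forall>f\<in>K. \<exists>p\<in>F. norm (f - p) \<le> \<epsilon>)"
    proof (cases "\<gamma> > 0")
      case True
      have "cheb_rad K \<le> 2 * cheb_rad K" by (simp add: mult_2)
      also have "\<dots> \<le> ennreal \<gamma>" by (rule assms(3))
      also have "\<dots> < top" by simp
      finally have "cheb_rad K < top" .
      then obtain r where r: "cheb_rad K = ennreal r" "r \<ge> 0"
        by (metis ennreal_cases less_irrefl infinity_ennreal_def)
      have "2 * r \<le> \<gamma>" using assms(3) r assms(2)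
        by (metis ennreal_le_iff ennreal_mult' ennreal_numeral mult_nonneg_nonneg zero_le_numeral)
      then have "r < \<gamma>" using True by linarith
      then have "cheb_rad K < ennreal \<gamma>" using r by (simp add: ennreal_lessI True)
      then obtain g where "(SUP f\<in>K. ennreal (norm (f - g))) < ennreal \<gamma>"
        unfolding cheb_rad_def by (auto simp: INF_less_iff)
      then have gK: "\<forall>f\<in>K. norm (f - g) \<le> \<gamma>"
        using True by (auto dest!: SUP_lessD simp: ennreal_less_iff less_imp_le)
      obtain T where T: "finite T" "T \<subseteq> K" "K \<subseteq> (\<Union>x\<in>T. ball x \<epsilon>)"
      proof -
        have tb: "\<forall>\<epsilon>>0. \<exists>k. finite k \<and> k \<subseteq> K \<and> K \<subseteq> (\<Union>x\<in>k. ball x \<epsilon>)"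
          by (rule seq_compact_imp_totally_bounded[OF compact_imp_seq_compact[OF assms(1)]])
        from tb e show ?thesis using that by meson
      qed
      show ?thesis
      proof (intro exI conjI)
        show "finite (insert g T)" using T by simp
        show "g \<in> insert g T" by simp
        show "\<forall>p\<in>insert g T. norm (p - g) \<le> \<gamma>" using gK T(2) assms(2) by auto
        show "\<forall>f\<in>K. \<exists>p\<in>insert g T. norm (f - p) \<le> \<epsilon>"
        proof
          fix f assume "f \<in> K"
          then obtain x where x: "x \<in> T" "f \<in> ball x \<epsilon>" using T(3) by blast
          then have "norm (f - x) \<le> \<epsilon>" by (simp add: dist_norm norm_minus_commute)
          then show "\<exists>p\<in>insert g T. norm (f - p) \<le> \<epsilon>" using x(1) by blast
        qed
      qed
    next
      case False
      then have g0: "\<gamma> = 0" using assms(2) by simp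
      then have "cheb_rad K = 0" using assms(3) by simp
      then have "cheb_rad K < ennreal \<epsilon>" using e by simp
      then obtain g where "(SUP f\<in>K. ennreal (norm (f - g))) < ennreal \<epsilon>"
        unfolding cheb_rad_def by (auto simp: INF_less_iff)
      then have gK: "\<forall>f\<in>K. norm (f - g) \<le> \<epsilon>"
        using e by (auto dest!: SUP_lessD simp: ennreal_less_iff less_imp_le)
      show ?thesis
        by (rule exI[of _ "{g}"], rule exI[of _ g]) (use gK g0 in simp)
    qed
    then obtain F g where F: "finite F" "g \<in> F" "\<forall>p\<in>F. norm (p - g) \<le> \<gamma>"
      "\<forall>f\<in>K. \<exists>p\<in>F. norm (f - p) \<le> \<epsilon>" by blast
    have "F \<noteq> {}" using F(2) by blast
    then obtain m :: nat and p where mp: "1 \<le> m" "F = p ` {..<m}" by (rule finite_enum[OF F(1)])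
    have A: "\<forall>i<m. norm (p i - g) \<le> \<gamma>"
    proof (intro allI impI)
      fix i assume "i < m" then have "p i \<in> F" using mp(2) by blast
      then show "norm (p i - g) \<le> \<gamma>" using F(3) by blast
    qed
    have B: "\<forall>f\<in>K. \<exists>i<m. norm (f - p i) \<le> \<epsilon>"
    proof
      fix f assume "f \<in> K"
      then obtain q where q: "q \<in> F" "norm (f - q) \<le> \<epsilon>" using F(4) by blast
      then obtain i where "i < m" "q = p i" using mp(2) by blast
      then show "\<exists>i<m. norm (f - p i) \<le> \<epsilon>" using q by blast
    qed
    have "lip_width \<gamma> K n \<le> ennreal \<epsilon>" if "n \<ge> m" for n
      by (rule lw_le[OF assms(2) A B mp(1) that])
    then show ?thesis by blast
  qed
  show ?thesis
  proof (rule order_tendstoI)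
    fix a :: ennreal assume "a < 0" then show "eventually (\<lambda>n. a < lip_width \<gamma> K n) sequentially" by simp
  next
    fix a :: ennreal assume a: "0 < a"
    obtain b where b: "0 < b" "b < a" using dense[OF a] by blast
    define \<epsilon> where "\<epsilon> = enn2real b"
    have bt: "b < top" using b(2) top_greatest by (rule less_le_trans)
    have eb: "ennreal \<epsilon> = b" using bt by (simp add: \<epsilon>_def)
    have "\<epsilon> > 0" using b(1) bt by (simp add: \<epsilon>_def enn2real_positive_iff)
    then obtain m where m: "\<forall>n\<ge>m. lip_width \<gamma> K n \<le> ennreal \<epsilon>" using key by blast
    have "\<forall>n\<ge>m. lip_width \<gamma> K n < a"
    proof (intro allI impI)
      fix n assume "n \<ge> m"
      then have "lip_width \<gamma> K n \<le> b" using m eb by simp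
      then show "lip_width \<gamma> K n < a" using b(2) by (rule le_less_trans)
    qed
    then show "eventually (\<lambda>n. lip_width \<gamma> K n < a) sequentially"
      unfolding eventually_sequentially by blast
  qed
qed

end
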